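(* For all positive integers $n$ and $k$, the outcome class of $G_{n,2nk}$ is $H$.
   Context: Domineering is a two-player game played on a rectangular grid of unit squares. The players alternate placing dominoes, each covering two adjacent unoccupied squares; the player Vertical must place dominoes vertically (covering two squares in the same column), and the player Horizontal must place them horizontally (covering two squares in the same row). A player with no legal move on her turn loses. $G_{m,n}$ denotes the empty board with vertical dimension $m$ (number of rows) and horizontal dimension $n$ (number of columns). Every position has one of four outcome classes under optimal play: $V$ (Vertical wins whoever moves first), $H$ (Horizontal wins whoever moves first), $1$ (the player who moves first wins), $2$ (the player who moves second wins). *)

theory Defs
  imports Main
begin

text \<open>Domineering. A position is the finite set of unoccupied squares; a square is
  a pair (row, column). Vertical covers (r,c),(r+1,c); Horizontal covers (r,c),(r,c+1).\<close>

datatype player = Vertical | Horizontal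

fun opponent :: "player \<Rightarrow> player" where
  "opponent Vertical = Horizontal"
| "opponent Horizontal = Vertical"

fun partner :: "player \<Rightarrow> nat \<times> nat \<Rightarrow> nat \<times> nat" where
  "partner Vertical (r, c) = (r + 1, c)"
| "partner Horizontal (r, c) = (r, c + 1)"

definition board :: "nat \<Rightarrow> nat \<Rightarrow> (nat \<times> nat) set" where
  "board m n = {(r, c). r < m \<and> c < n}"

text \<open>With f \<ge> card S the bound is never reached before moves run out.\<close>
fun wins_fuel :: "nat \<Rightarrow> player \<Rightarrow> (nat \<times> nat) set \<Rightarrow> bool" where
  "wins_fuel 0 P S = False"
| "wins_fuel (Suc f) P S =
     (\<exists>x\<in>S. partner P x \<in> S \<and> \<not> wins_fuel f (opponent P) (S - {x, partner P x}))"

definition wins_moving_first :: "player \<Rightarrow> (nat \<times> nat) set \<Rightarrow> bool" where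
  "wins_moving_first P S = wins_fuel (card S) P S"

datatype outcome = OutV | OutH | Out1 | Out2

definition outcome_class :: "(nat \<times> nat) set \<Rightarrow> outcome" where
  "outcome_class S =
    (if wins_moving_first Vertical S \<and> \<not> wins_moving_first Horizontal S then OutV
     else if wins_moving_first Horizontal S \<and> \<not> wins_moving_first Vertical S then OutH
     else if wins_moving_first Vertical S \<and> wins_moving_first Horizontal S then Out1
     else Out2)"

end

theory Submission
  imports Defs
begin

definition sig :: "nat \<Rightarrow> nat \<times> nat \<Rightarrow> nat \<times> nat" where
  "sig n x = (let r = fst x; c = snd x; j = c div (2*n); b = c mod (2*n) in
     if b < n then (n - 1 - b, 2*n*j + n + r) else (b - n, 2*n*j + (n - 1 - r)))"

lemma dm: "(b::nat) < 2*n \<Longrightarrow> (2*n*j + b) div (2*n) = j \<and> (2*n*j + b) mod (2*n) = b"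
  by (simp add: mult.commute)

lemma sig_eq: "b < 2*n \<Longrightarrow> sig n (r, 2*n*j + b) =
   (if b < n then (n - 1 - b, 2*n*j + n + r) else (b - n, 2*n*j + (n - 1 - r)))"
  using dm[of b n j] by (simp add: sig_def Let_def)

lemma col_lt: "(b::nat) < 2*n \<Longrightarrow> (2*n*j + b < 2*n*k) = (j < k)"
proof
  assume b: "b < 2*n" and h: "2*n*j + b < 2*n*k"
  show "j < k"
  proof (rule ccontr)
    assume "\<not> j < k" then have "k \<le> j" by simp
    then have "2*n*k \<le> 2*n*j" by (rule mult_le_mono2)
    then show False using h by linarith
  qed
next
  assume b: "b < 2*n" and h: "j < k"
  then have "Suc j \<le> k" by simp
  then have "2*n*Suc j \<le> 2*n*k" by (rule mult_le_mono2)
  then show "2*n*j + b < 2*n*k" using b by simp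
qed

lemma decomp: assumes "(n::nat) > 0" obtains j b where "c = 2*n*j + b" "b < 2*n"
proof -
  have "c = 2*n*(c div (2*n)) + c mod (2*n)" by simp
  moreover have "c mod (2*n) < 2*n" using assms by simp
  ultimately show ?thesis using that by blast
qed

lemma board_mem: "b < 2*n \<Longrightarrow> ((r, 2*n*j + b) \<in> board n (2*n*k)) = (r < n \<and> j < k)"
  using col_lt[of b n j k] by (simp add: board_def)

lemma sig_props:
  assumes n: "n > 0" and x: "x \<in> board n (2*n*k)"
  shows "sig n x \<in> board n (2*n*k) \<and> sig n (sig n x) = x \<and>
         ((snd (sig n x) mod (2*n) < n) = (\<not> snd x mod (2*n) < n))"
proof -
  obtain r c where xe: "x = (r, c)" by (cases x)
  obtain j b where c: "c = 2*n*j + b" "b < 2*n" using decomp n by blast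
  have rj: "r < n" "j < k" using x board_mem[OF c(2)] by (auto simp: xe c)
  show ?thesis
  proof (cases "b < n")
    case True
    obtain t where t: "n = b + 1 + t" using True by (metis add.commute add_Suc less_imp_Suc_add plus_1_eq_Suc)
    have e1: "sig n x = (t, 2*n*j + (n + r))" using sig_eq[OF c(2)] True by (simp add: xe c add.assoc t)
    have nr: "n + r < 2*n" using rj by simp
    have tn: "t < 2*n" "t < n" using t by auto
    have e2: "sig n (t, 2*n*j + (n + r)) = (r, 2*n*j+b)"
      using sig_eq[OF nr, of t j] True by (simp add: t)
    have in1: "(t, 2*n*j + (n + r)) \<in> board n (2*n*k)" using board_mem[OF nr] rj tn by simp
    have m1: "(2*n*j + (n + r)) mod (2*n) = n + r" using dm[OF nr, of j] by simp
    have m2: "(2*n*j + b) mod (2*n) = b" using dm[OF c(2), of j] by simp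
    show ?thesis using e1 e2 in1 m1 m2 True by (simp add: xe c)
  next
    case False
    obtain b' where bb: "b = n + b'" using False by (metis le_Suc_ex not_less)
    obtain s where s: "n = r + 1 + s" using rj by (metis add.commute add_Suc less_imp_Suc_add plus_1_eq_Suc)
    have e1: "sig n x = (b', 2*n*j + s)" using sig_eq[OF c(2)] False by (simp add: xe c bb s)
    have nr: "s < 2*n" "s < n" using s by auto
    have e2: "sig n (b', 2*n*j + s) = (r, 2*n*j+b)"
      using sig_eq[OF nr(1), of b' j] nr(2) by (simp add: bb s)
    have bn: "b' < n" using c(2) bb by simp
    have in1: "(b', 2*n*j + s) \<in> board n (2*n*k)" using board_mem[OF nr(1)] rj bn by simp
    have m1: "(2*n*j + s) mod (2*n) = s" using dm[OF nr(1), of j] by simp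
    have m2: "(2*n*j + b) mod (2*n) = b" using dm[OF c(2), of j] by simp
    show ?thesis using e1 e2 in1 m1 m2 False nr by (simp add: xe c)
  qed
qed

lemma sig_dom:
  assumes n: "n > 0" and x: "x \<in> board n (2*n*k)" and px: "partner Vertical x \<in> board n (2*n*k)"
  shows "partner Horizontal (sig n x) = sig n (partner Vertical x) \<or>
         partner Horizontal (sig n (partner Vertical x)) = sig n x"
proof -
  obtain r c where xe: "x = (r, c)" by (cases x)
  obtain j b where c: "c = 2*n*j + b" "b < 2*n" using decomp n by blast
  have rj: "r + 1 < n" using px board_mem[OF c(2)] by (auto simp: xe c)
  show ?thesis
  proof (cases "b < n")
    case True
    then show ?thesis using sig_eq[OF c(2), of r j] sig_eq[OF c(2), of "r+1" j] by (simp add: xe c)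
  next
    case False
    obtain s where s: "n = r + 2 + s" using rj by (metis add.commute add_Suc less_imp_Suc_add plus_1_eq_Suc add_2_eq_Suc')
    have "sig n x = (b - n, 2*n*j + (s + 1))" using sig_eq[OF c(2), of r j] False by (simp add: xe c s)
    moreover have "sig n (partner Vertical x) = (b - n, 2*n*j + s)"
      using sig_eq[OF c(2), of "r+1" j] False by (simp add: xe c s)
    ultimately show ?thesis by simp
  qed
qed

lemma fin_board: "finite (board m w)"
proof -
  have "board m w = {..<m} \<times> {..<w}" by (auto simp: board_def)
  then show ?thesis by simp
qed

lemma main:
  assumes n: "n > 0"
  shows "\<forall>S. S \<subseteq> board n (2*n*k) \<longrightarrow> (\<forall>x\<in>board n (2*n*k). (x \<in> S) = (sig n x \<in> S))
           \<longrightarrow> card S \<le> f \<longrightarrow> \<not> wins_fuel f Vertical S"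
proof (induction f rule: less_induct)
  case (less f)
  let ?B = "board n (2*n*k)"
  show ?case
  proof (intro allI impI)
    fix S assume sub: "S \<subseteq> ?B" and sym: "\<forall>x\<in>?B. (x \<in> S) = (sig n x \<in> S)" and cardS: "card S \<le> f"
    have finS: "finite S" using sub fin_board finite_subset by blast
    show "\<not> wins_fuel f Vertical S"
    proof (cases f)
      case 0 then show ?thesis by simp
    next
      case (Suc f1)
      have "\<forall>x\<in>S. partner Vertical x \<in> S \<longrightarrow> wins_fuel f1 Horizontal (S - {x, partner Vertical x})"
      proof (intro ballI impI)
        fix x assume xS: "x \<in> S" and pxS: "partner Vertical x \<in> S"
        define px where "px = partner Vertical x"
        have xB: "x \<in> ?B" and pxB: "px \<in> ?B" using xS pxS sub px_def by auto
        have neq: "x \<noteq> px" by (cases x) (simp add: px_def)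
        have "card {x, px} \<le> card S" using xS pxS finS px_def by (intro card_mono) auto
        then have c2: "card S \<ge> 2" using neq by simp
        then obtain g where g: "f1 = Suc g" using Suc cardS by (cases f1) auto
        have sx: "sig n x \<in> S" and spx: "sig n px \<in> S" using sym xB pxB xS pxS px_def by auto
        have spx_col: "snd px = snd x" by (cases x) (simp add: px_def)
        note P1 = sig_props[OF n xB] and P2 = sig_props[OF n pxB]
        have dist: "sig n x \<notin> {x, px}" "sig n px \<notin> {x, px}"
          using P1 P2 spx_col by auto
        obtain y where y: "{y, partner Horizontal y} = {sig n x, sig n px}"
          using sig_dom[OF n xB] pxB px_def by (metis insert_commute)
        define S2 where "S2 = S - {x, px} - {y, partner Horizontal y}"
        have S2sub: "S2 \<subseteq> ?B" using sub S2_def by auto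
        have S2sym: "\<forall>z\<in>?B. (z \<in> S2) = (sig n z \<in> S2)"
        proof
          fix z assume zB: "z \<in> ?B"
          note P3 = sig_props[OF n zB]
          have "(z \<in> {x, px, sig n x, sig n px}) = (sig n z \<in> {x, px, sig n x, sig n px})"
            using P1 P2 P3 by auto
          then show "(z \<in> S2) = (sig n z \<in> S2)" using sym zB y unfolding S2_def by auto
        qed
        have "card (S - {x, px}) = card S - 2"
          using xS pxS neq finS px_def by (subst card_Diff_subset) auto
        moreover have "card S2 \<le> card (S - {x, px})" unfolding S2_def using finS by (intro card_mono) auto
        ultimately have "card S2 \<le> g" using cardS Suc g by simp
        then have nw: "\<not> wins_fuel g Vertical S2" using less.IH[of g] Suc g S2sub S2sym by auto
        have yin: "y \<in> S - {x, px}" "partner Horizontal y \<in> S - {x, px}"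
          using y sx spx dist by (auto simp: insert_eq_iff doubleton_eq_iff)
        show "wins_fuel f1 Horizontal (S - {x, partner Vertical x})"
          unfolding g using yin nw S2_def px_def by auto
      qed
      then show ?thesis using Suc by auto
    qed
  qed
qed

theorem proposition3p1:
  fixes n k :: nat
  assumes "n > 0" and "k > 0"
  shows "outcome_class (board n (2 * n * k)) = OutH"
proof -
  let ?B = "board n (2*n*k)"
  have symB: "\<forall>x\<in>?B. (x \<in> ?B) = (sig n x \<in> ?B)" using sig_props[OF assms(1)] by blast
  have nV: "\<not> wins_moving_first Vertical ?B"
    unfolding wins_moving_first_def using main[OF assms(1), of k "card ?B"] symB by blast
  define y where "y = (0::nat, n - 1)"
  have py: "partner Horizontal y = (0, n)" using assms by (simp add: y_def)
  have "n < 2*n*k"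
  proof -
    have "2*n*1 \<le> 2*n*k" using assms by (intro mult_le_mono2) simp
    then show ?thesis using assms by simp
  qed
  then have yB: "y \<in> ?B" "(0, n) \<in> ?B" using assms by (auto simp: y_def board_def less_imp_diff_less)
  have "card {y, (0, n)} \<le> card ?B" using yB fin_board by (intro card_mono) auto
  moreover have "y \<noteq> (0, n)" using assms by (simp add: y_def)
  ultimately have "card ?B \<ge> 2" by simp
  then obtain m where m: "card ?B = Suc m" by (cases "card ?B") auto
  have sy: "sig n y = (0, n)" "sig n (0, n) = y"
  proof -
    have a: "n - 1 < 2*n" "(0::nat) < 2*n" using assms by auto
    show "sig n y = (0, n)" using sig_eq[OF a(1), of 0 0] assms by (simp add: y_def)
    show "sig n (0, n) = y" using sig_props[OF assms(1) yB(1)] \<open>sig n y = (0, n)\<close> by simp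
  qed
  define S where "S = ?B - {y, (0, n)}"
  have Ssym: "\<forall>z\<in>?B. (z \<in> S) = (sig n z \<in> S)"
  proof
    fix z assume zB: "z \<in> ?B"
    note P = sig_props[OF assms(1) zB]
    have "(z \<in> {y, (0,n)}) = (sig n z \<in> {y, (0,n)})" using P sy by auto
    then show "(z \<in> S) = (sig n z \<in> S)" using zB P unfolding S_def by auto
  qed
  have "card S = card ?B - 2" unfolding S_def
    using yB fin_board \<open>y \<noteq> (0, n)\<close> by (subst card_Diff_subset) auto
  then have "card S \<le> m" using m by simp
  then have "\<not> wins_fuel m Vertical S" using main[OF assms(1), of k m] Ssym S_def by auto
  then have H: "wins_moving_first Horizontal ?B"
    unfolding wins_moving_first_def m wins_fuel.simps opponent.simps
  proof (intro bexI conjI)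
    show "partner Horizontal y \<in> ?B" using py yB by simp
    show "\<not> wins_fuel m Vertical (?B - {y, partner Horizontal y})" using py S_def \<open>\<not> wins_fuel m Vertical S\<close> by simp
  qed (rule yB(1))
  show ?thesis using nV H by (simp add: outcome_class_def)
qed

end
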